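(* Fix $\varepsilon>0$ and a dataset $D=\{(x_i,y_i)\}_{i=1}^n$ with $x_i,y_i\in[0,1]$. With the noisy statistics and $\tilde n_y$ defined in the context, define $\hat S_{x}:=\frac23\bigl(\tilde S_{x^2}+\tilde S_{x-x^2}\bigr)+\frac13\bigl(\tilde n_y-\tilde S_{1-x}\bigr)$. Then $\hat S_x$ is an unbiased estimator of $S_x=\sum_i x_i$ with variance $\mathrm{Var}(\hat S_x)=\frac{32}{3\varepsilon^2}$.
   Context: Let $\varepsilon_1=\varepsilon_2=\varepsilon/2$. Define the statistics $S_{x^2}=\sum_i x_i^2$, $S_{x-x^2}=\sum_i (x_i-x_i^2)$, $S_{1-x}=\sum_i(1-x_i)$, $S_{xy}=\sum_i x_iy_i$, $S_{(1-x)y}=\sum_i (1-x_i)y_i$, $S_{1-y}=\sum_i(1-y_i)$. Let $Z_{11},Z_{12},Z_{13}\stackrel{iid}{\sim}\mathrm{Lap}(1/\varepsilon_1)$ and $Z_{21},Z_{22},Z_{23}\stackrel{iid}{\sim}\mathrm{Lap}(1/\varepsilon_2)$, all six mutually independent, where $\mathrm{Lap}(b)$ is the zero-mean Laplace distribution with density $\frac{1}{2b}e^{-|z|/b}$. Set $\tilde S_{x^2}=S_{x^2}+Z_{11}$, $\tilde S_{x-x^2}=S_{x-x^2}+Z_{12}$, $\tilde S_{1-x}=S_{1-x}+Z_{13}$, $\tilde S_{xy}=S_{xy}+Z_{21}$, $\tilde S_{(1-x)y}=S_{(1-x)y}+Z_{22}$, $\tilde S_{1-y}=S_{1-y}+Z_{23}$,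 and $\tilde n_x=\tilde S_{x^2}+\tilde S_{x-x^2}+\tilde S_{1-x}$, $\tilde n_y=\tilde S_{xy}+\tilde S_{(1-x)y}+\tilde S_{1-y}$. The dataset is fixed; expectations and variances are over the noise. *)

theory Defs
  imports "HOL-Probability.Probability"
begin

definition laplace_density :: "real \<Rightarrow> real \<Rightarrow> real" where
  "laplace_density b z = exp (- \<bar>z\<bar> / b) / (2 * b)"

end

theory Submission imports Defs begin

lemma erl_moment:
  fixes l :: real and k :: nat
  assumes l: "0 < l"
  shows "has_bochner_integral lborel (\<lambda>z. erlang_density 0 l z * z ^ k) (fact k / l ^ k)"
proof (rule has_bochner_integral_nn_integral)
  show "AE x in lborel. 0 \<le> erlang_density 0 l x * x ^ k"
    using l by (intro AE_I2) (auto simp: erlang_density_def)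
  show "(\<integral>\<^sup>+ x. ennreal (erlang_density 0 l x * x ^ k) \<partial>lborel) = ennreal (fact k / l ^ k)"
    using nn_integral_erlang_ith_moment[OF l, of 0 k] by simp
qed (use l in auto)

lemma lap_moment:
  fixes l :: real and k :: nat
  assumes l: "0 < l" and k: "k = 1 \<or> k = 2"
  shows "has_bochner_integral lborel (\<lambda>z. (l / 2 * exp (- l * \<bar>z\<bar>)) * z ^ k)
           ((1/2) * (fact k / l ^ k) + ((-1)^k / 2) * (fact k / l ^ k))"
proof -
  let ?h = "\<lambda>z. erlang_density 0 l z * z ^ k"
  have h: "has_bochner_integral lborel ?h (fact k / l ^ k)" by (rule erl_moment[OF l])
  have hi: "integrable lborel ?h" using h by (auto simp: has_bochner_integral_iff)
  have hm: "integrable lborel (\<lambda>z. ?h (0 + (-1) * z))"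
    using lborel_integrable_real_affine_iff[of "-1" ?h 0] hi by simp
  have hmi: "integral\<^sup>L lborel (\<lambda>z. ?h (0 + (-1) * z)) = fact k / l ^ k"
    using lborel_integral_real_affine[of "-1" ?h 0] h by (simp add: has_bochner_integral_iff)
  have eq: "(\<lambda>z. (l / 2 * exp (- l * \<bar>z\<bar>)) * z ^ k) =
        (\<lambda>z. (1/2) * ?h z + ((-1)^k / 2) * ?h (0 + (-1) * z))"
  proof
    fix z :: real
    show "(l / 2 * exp (- l * \<bar>z\<bar>)) * z ^ k = (1/2) * ?h z + ((-1)^k / 2) * ?h (0 + (-1) * z)"
      using k by (cases "z < 0"; cases "z = 0") (auto simp: erlang_density_def power2_eq_square)
  qed
  have "has_bochner_integral lborel (\<lambda>z. (1/2) * ?h z + ((-1)^k / 2) * ?h (0 + (-1) * z))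
      ((1/2) * (fact k / l ^ k) + ((-1)^k / 2) * (fact k / l ^ k))"
    apply (intro has_bochner_integral_add has_bochner_integral_mult_right h)
    using hm hmi by (metis has_bochner_integral_integrable)
  then show ?thesis unfolding eq .
qed

lemma (in prob_space) var_lin:
  fixes X :: "'i \<Rightarrow> 'a \<Rightarrow> real"
  assumes fin: "finite I" and ind: "indep_vars (\<lambda>_. borel) X I"
    and i1: "\<And>i. i\<in>I \<Longrightarrow> integrable M (X i)"
    and i2: "\<And>i. i\<in>I \<Longrightarrow> integrable M (\<lambda>\<omega>. X i \<omega> ^ 2)"
    and e1: "\<And>i. i\<in>I \<Longrightarrow> expectation (X i) = 0"
    and e2: "\<And>i. i\<in>I \<Longrightarrow> expectation (\<lambda>\<omega>. X i \<omega> ^ 2) = v"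
  shows "integrable M (\<lambda>\<omega>. (\<Sum>i\<in>I. c i * X i \<omega>)^2)
     \<and> expectation (\<lambda>\<omega>. (\<Sum>i\<in>I. c i * X i \<omega>)^2) = v * (\<Sum>i\<in>I. c i ^ 2)"
proof -
  have pint: "integrable M (\<lambda>\<omega>. X i \<omega> * X j \<omega>) \<and>
      expectation (\<lambda>\<omega>. X i \<omega> * X j \<omega>) = (if i = j then v else 0)"
    if "i \<in> I" "j \<in> I" for i j
  proof (cases "i = j")
    case True
    then show ?thesis using i2[OF that(1)] e2[OF that(1)] by (simp add: power2_eq_square)
  next
    case False
    have ij: "indep_vars (\<lambda>_. borel) X {i, j}"
      using indep_vars_subset[OF ind] that by auto
    have p: "\<And>\<omega>. (\<Prod>k\<in>{i,j}. X k \<omega>) = X i \<omega> * X j \<omega>" using False by simp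
    have "integrable M (\<lambda>\<omega>. (\<Prod>k\<in>{i,j}. X k \<omega>))"
      by (rule indep_vars_integrable[OF _ ij]) (use i1 that in auto)
    moreover have "expectation (\<lambda>\<omega>. (\<Prod>k\<in>{i,j}. X k \<omega>)) = (\<Prod>k\<in>{i,j}. expectation (X k))"
      by (rule indep_vars_lebesgue_integral[OF _ ij]) (use i1 that in auto)
    ultimately show ?thesis using False e1 that by (simp add: p)
  qed
  have sq: "(\<lambda>\<omega>. (\<Sum>i\<in>I. c i * X i \<omega>)^2) =
      (\<lambda>\<omega>. \<Sum>i\<in>I. \<Sum>j\<in>I. c i * c j * (X i \<omega> * X j \<omega>))"
    by (auto simp: power2_eq_square sum_product intro!: ext sum.cong)
  have "integrable M (\<lambda>\<omega>. \<Sum>i\<in>I. \<Sum>j\<in>I. c i * c j * (X i \<omega> * X j \<omega>))"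
    using pint by (intro Bochner_Integration.integrable_sum integrable_mult_right) auto
  moreover have "expectation (\<lambda>\<omega>. \<Sum>i\<in>I. \<Sum>j\<in>I. c i * c j * (X i \<omega> * X j \<omega>))
       = (\<Sum>i\<in>I. \<Sum>j\<in>I. c i * c j * (if i = j then v else 0))"
    using pint by (simp add: Bochner_Integration.integral_sum integrable_mult_right)
  moreover have "(\<Sum>i\<in>I. \<Sum>j\<in>I. c i * c j * (if i = j then v else 0)) = v * (\<Sum>i\<in>I. c i ^ 2)"
  proof -
    have "(\<Sum>j\<in>I. c i * c j * (if i = j then v else 0)) = v * c i ^ 2" if "i \<in> I" for i
    proof -
      have "(\<Sum>j\<in>I. c i * c j * (if i = j then v else 0)) = (\<Sum>j\<in>I. if i = j then c i * c j * v else 0)"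
        by (rule sum.cong) auto
      also have "\<dots> = c i * c i * v" using fin that by (simp add: sum.delta)
      finally show ?thesis by (simp add: power2_eq_square)
    qed
    then show ?thesis by (simp add: sum_distrib_left)
  qed
  ultimately show ?thesis unfolding sq by simp
qed

lemma lap_rv:
  fixes X :: "'a \<Rightarrow> real" and l :: real
  assumes P: "prob_space M" and l: "0 < l"
    and D: "distributed M lborel X (\<lambda>z. ennreal (l / 2 * exp (- l * \<bar>z\<bar>)))"
  shows "integrable M X \<and> integrable M (\<lambda>\<omega>. X \<omega> ^ 2) \<and> prob_space.expectation M X = 0
     \<and> prob_space.expectation M (\<lambda>\<omega>. X \<omega> ^ 2) = 2 / l ^ 2"
proof -
  have nn: "\<And>z. 0 \<le> l / 2 * exp (- l * \<bar>z\<bar>)" using l by simp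
  have m1: "has_bochner_integral lborel (\<lambda>z. (l / 2 * exp (- l * \<bar>z\<bar>)) * z) 0"
    using lap_moment[OF l, of 1] by simp
  have m2: "has_bochner_integral lborel (\<lambda>z. (l / 2 * exp (- l * \<bar>z\<bar>)) * z ^ 2) (2 / l ^ 2)"
    using lap_moment[OF l, of 2] by (simp add: field_simps)
  have "integrable M (\<lambda>x. X x)"
    using distributed_integrable[OF D, of "\<lambda>z. z"] m1 nn by (auto simp: has_bochner_integral_iff)
  moreover have "integrable M (\<lambda>x. X x ^ 2)"
    using distributed_integrable[OF D, of "\<lambda>z. z ^ 2"] m2 nn by (auto simp: has_bochner_integral_iff)
  moreover have "integral\<^sup>L M (\<lambda>x. X x) = 0"
    using distributed_integral[OF D, of "\<lambda>z. z"] m1 nn by (auto simp: has_bochner_integral_iff)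
  moreover have "integral\<^sup>L M (\<lambda>x. X x ^ 2) = 2 / l ^ 2"
    using distributed_integral[OF D, of "\<lambda>z. z ^ 2"] m2 nn by (auto simp: has_bochner_integral_iff)
  ultimately show ?thesis by simp
qed

theorem mainTheorem11:
  fixes M :: "'a measure" and \<epsilon> :: real and n :: nat
    and x y :: "nat \<Rightarrow> real"
    and Z :: "nat \<Rightarrow> nat \<Rightarrow> 'a \<Rightarrow> real"
  assumes "prob_space M"
    and eps: "\<epsilon> > 0"
    and data: "\<And>i. i < n \<Longrightarrow> x i \<in> {0..1} \<and> y i \<in> {0..1}"
    and indep: "prob_space.indep_vars M (\<lambda>_. borel) (\<lambda>(j, k). Z j k) ({1, 2} \<times> {1, 2, 3})"
    and lap1: "\<And>k. k \<in> {1, 2, 3} \<Longrightarrow>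
                 distributed M lborel (Z 1 k) (\<lambda>z. ennreal (laplace_density (1 / (\<epsilon> / 2)) z))"
    and lap2: "\<And>k. k \<in> {1, 2, 3} \<Longrightarrow>
                 distributed M lborel (Z 2 k) (\<lambda>z. ennreal (laplace_density (1 / (\<epsilon> / 2)) z))"
  shows
    "let S_x2 = (\<Sum>i<n. x i ^ 2);
         S_xmx2 = (\<Sum>i<n. x i - x i ^ 2);
         S_1mx = (\<Sum>i<n. 1 - x i);
         S_xy = (\<Sum>i<n. x i * y i);
         S_1mxy = (\<Sum>i<n. (1 - x i) * y i);
         S_1my = (\<Sum>i<n. 1 - y i);
         tS_x2 = (\<lambda>\<omega>. S_x2 + Z 1 1 \<omega>);
         tS_xmx2 = (\<lambda>\<omega>. S_xmx2 + Z 1 2 \<omega>);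
         tS_1mx = (\<lambda>\<omega>. S_1mx + Z 1 3 \<omega>);
         tS_xy = (\<lambda>\<omega>. S_xy + Z 2 1 \<omega>);
         tS_1mxy = (\<lambda>\<omega>. S_1mxy + Z 2 2 \<omega>);
         tS_1my = (\<lambda>\<omega>. S_1my + Z 2 3 \<omega>);
         tn_y = (\<lambda>\<omega>. tS_xy \<omega> + tS_1mxy \<omega> + tS_1my \<omega>);
         hatS_x = (\<lambda>\<omega>. 2 / 3 * (tS_x2 \<omega> + tS_xmx2 \<omega>) + 1 / 3 * (tn_y \<omega> - tS_1mx \<omega>))
     in integrable M hatS_x
        \<and> prob_space.expectation M hatS_x = (\<Sum>i<n. x i)
        \<and> prob_space.variance M hatS_x = 32 / (3 * \<epsilon> ^ 2)"
proof -
  interpret P: prob_space M by fact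
  define l where "l = \<epsilon> / 2"
  have l: "0 < l" using eps by (simp add: l_def)
  have dens: "(\<lambda>z. ennreal (laplace_density (1 / (\<epsilon> / 2)) z)) = (\<lambda>z. ennreal (l / 2 * exp (- l * \<bar>z\<bar>)))"
    using eps by (auto simp: laplace_density_def l_def field_simps intro!: ext)
  define I where "I = ({1, 2} \<times> {1, 2, 3} :: (nat \<times> nat) set)"
  define W where "W = (\<lambda>(j, k). Z j k)"
  have Iexp: "I = {(1,1),(1,2),(1,3),(2,1),(2,2),(2,3)}" by (auto simp: I_def)
  have rv: "integrable M (W p) \<and> integrable M (\<lambda>\<omega>. W p \<omega> ^ 2) \<and> P.expectation (W p) = 0
     \<and> P.expectation (\<lambda>\<omega>. W p \<omega> ^ 2) = 2 / l ^ 2" if pI: "p \<in> I" for p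
  proof -
    obtain j k where p: "p = (j, k)" "j \<in> {1,2}" "k \<in> {1,2,3}" using pI unfolding I_def by blast
    have "distributed M lborel (Z j k) (\<lambda>z. ennreal (l / 2 * exp (- l * \<bar>z\<bar>)))"
      using p lap1 lap2 dens by auto
    from lap_rv[OF assms(1) l this] show ?thesis by (simp add: W_def p)
  qed
  define c where "c = (\<lambda>p::nat\<times>nat. if p = (1,1) \<or> p = (1,2) then 2/3 else if p = (1,3) then -1/3 else (1/3::real))"
  let ?Sx = "(\<Sum>i<n. x i)"
  have s1: "(\<Sum>i<n. x i ^ 2) + (\<Sum>i<n. x i - x i ^ 2) = ?Sx"
    by (simp add: sum.distrib[symmetric] sum_subtractf)
  have s2: "(\<Sum>i<n. x i * y i) + (\<Sum>i<n. (1 - x i) * y i) + (\<Sum>i<n. 1 - y i) - (\<Sum>i<n. 1 - x i) = ?Sx"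
  proof -
    have "(\<Sum>i<n. x i * y i) + (\<Sum>i<n. (1 - x i) * y i) + (\<Sum>i<n. 1 - y i) - (\<Sum>i<n. 1 - x i)
       = (\<Sum>i<n. x i * y i + (1 - x i) * y i + (1 - y i) - (1 - x i))"
      by (simp add: sum.distrib sum_subtractf)
    also have "\<dots> = ?Sx" by (rule sum.cong) (auto simp: algebra_simps)
    finally show ?thesis .
  qed
  define H where "H = (\<lambda>\<omega>. 2 / 3 * (((\<Sum>i<n. x i ^ 2) + Z 1 1 \<omega>) + ((\<Sum>i<n. x i - x i ^ 2) + Z 1 2 \<omega>))
       + 1 / 3 * ((((\<Sum>i<n. x i * y i) + Z 2 1 \<omega>) + ((\<Sum>i<n. (1 - x i) * y i) + Z 2 2 \<omega>)
            + ((\<Sum>i<n. 1 - y i) + Z 2 3 \<omega>)) - ((\<Sum>i<n. 1 - x i) + Z 1 3 \<omega>)))"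
  have Hform: "H = (\<lambda>\<omega>. ?Sx + (\<Sum>p\<in>I. c p * W p \<omega>))"
  proof
    fix \<omega>
    show "H \<omega> = ?Sx + (\<Sum>p\<in>I. c p * W p \<omega>)"
      unfolding Iexp H_def using s1 s2 by (simp add: c_def W_def algebra_simps)
  qed
  have intS: "integrable M (\<lambda>\<omega>. \<Sum>p\<in>I. c p * W p \<omega>)"
    using rv by (intro Bochner_Integration.integrable_sum integrable_mult_right) auto
  have intH: "integrable M H" unfolding Hform using intS by simp
  have eS: "P.expectation (\<lambda>\<omega>. \<Sum>p\<in>I. c p * W p \<omega>) = 0"
    using rv by (simp add: Bochner_Integration.integral_sum integrable_mult_right)
  have eH: "P.expectation H = ?Sx"
    unfolding Hform using intS eS by (simp add: P.prob_space)
  have ind: "P.indep_vars (\<lambda>_. borel) W I" using indep by (simp add: W_def I_def)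
  have vl: "integrable M (\<lambda>\<omega>. (\<Sum>p\<in>I. c p * W p \<omega>)^2) \<and>
      P.expectation (\<lambda>\<omega>. (\<Sum>p\<in>I. c p * W p \<omega>)^2) = (2 / l^2) * (\<Sum>p\<in>I. c p ^ 2)"
    by (rule P.var_lin) (use rv ind in \<open>auto simp: I_def\<close>)
  have vH: "P.variance H = 32 / (3 * \<epsilon> ^ 2)"
  proof -
    have "P.variance H = P.expectation (\<lambda>\<omega>. (\<Sum>p\<in>I. c p * W p \<omega>)^2)"
      unfolding eH by (simp add: Hform)
    also have "\<dots> = (2 / l^2) * (\<Sum>p\<in>I. c p ^ 2)" using vl by simp
    also have "\<dots> = 32 / (3 * \<epsilon> ^ 2)" unfolding Iexp using eps
      by (simp add: c_def l_def field_simps power2_eq_square)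
    finally show ?thesis .
  qed
  show ?thesis unfolding Let_def using intH eH vH by (simp add: H_def)
qed

end
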